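(* Let $g\le3$ and let $W$ be a $\mathbb{C}$-vector space of dimension $g$ of quadratic forms on $\mathbb{C}^g$, containing a non-degenerate quadratic form. Then there exists a vector $v\in\mathbb{C}^g$ which is not in the kernel of any non-zero quadratic form in $W$.
   Context: The kernel of a quadratic form $q$ on $\mathbb{C}^g$ is the kernel of its associated symmetric bilinear form (equivalently of its symmetric matrix). *)

theory Defs
  imports "HOL-Analysis.Analysis"
begin

text \<open>Quadratic forms on C^g are represented by their symmetric g x g complex
matrices. The space of g x g complex matrices is a C-vector space via
entrywise scalar multiplication.\<close>

definition cmat_scale :: "complex \<Rightarrow> complex^'n^'n \<Rightarrow> complex^'n^'n" where
  "cmat_scale c A = (\<chi> i j. c * A $ i $ j)"

interpretation cmat: vector_space cmat_scale
  by unfold_locales (simp_all add: cmat_scale_def vec_eq_iff algebra_simps)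

text \<open>A quadratic form (symmetric matrix) is non-degenerate iff its matrix is invertible.\<close>
definition symmetric_mat :: "complex^'n^'n \<Rightarrow> bool" where
  "symmetric_mat A \<longleftrightarrow> transpose A = A"

definition qf_kernel :: "complex^'n^'n \<Rightarrow> (complex^'n) set" where
  "qf_kernel A = {v. A *v v = 0}"

end

theory Submission imports Defs "HOL-Computational_Algebra.Polynomial" begin

definition bd :: "complex^'n \<Rightarrow> complex^'n \<Rightarrow> complex" where
  "bd x y = (\<Sum>j\<in>UNIV. x$j * y$j)"

lemma bd_add1: "bd (x + x') y = bd x y + bd x' y"
  by (simp add: bd_def distrib_right sum.distrib)
lemma bd_add2: "bd x (y + y') = bd x y + bd x y'"
  by (simp add: bd_def distrib_left sum.distrib)
lemma bd_diff1: "bd (x - x') y = bd x y - bd x' y"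
  by (simp add: bd_def left_diff_distrib sum_subtractf)
lemma bd_diff2: "bd x (y - y') = bd x y - bd x y'"
  by (simp add: bd_def right_diff_distrib sum_subtractf)
lemma bd_smul1: "bd (c *s x) y = c * bd x y"
  by (simp add: bd_def sum_distrib_left mult.assoc)
lemma bd_smul2: "bd x (c *s y) = c * bd x y"
  by (simp add: bd_def sum_distrib_left algebra_simps)
lemma bd_0[simp]: "bd 0 y = 0" "bd x 0 = 0"
  by (simp_all add: bd_def)
lemma bd_comm: "bd x y = bd y x"
  by (simp add: bd_def mult.commute)
lemma bd_axis: "bd (axis k 1) y = y $ k"
proof -
  have "bd (axis k 1) y = (\<Sum>j\<in>UNIV. if j = k then y $ j else 0)"
    unfolding bd_def axis_def by (rule sum.cong) auto
  then show ?thesis by simp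
qed

lemma bd_zero: "(\<And>w. bd w x = 0) \<Longrightarrow> x = 0"
  by (metis bd_axis vec_eq_iff zero_index)

lemma sym_bd:
  assumes "symmetric_mat A"
  shows "bd x (A *v y) = bd (A *v x) y"
proof -
  have t: "A $ i $ j = A $ j $ i" for i j
    using assms unfolding symmetric_mat_def by (metis transpose_def vec_lambda_beta)
  have "bd x (A *v y) = (\<Sum>i\<in>UNIV. \<Sum>j\<in>UNIV. x$i * (A$i$j * y$j))"
    by (simp add: bd_def matrix_vector_mult_def sum_distrib_left)
  also have "\<dots> = (\<Sum>j\<in>UNIV. \<Sum>i\<in>UNIV. x$i * (A$i$j * y$j))"
    by (rule sum.swap)
  also have "\<dots> = bd (A *v x) y"
    by (simp add: bd_def matrix_vector_mult_def sum_distrib_right sum_distrib_left t mult_ac)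
  finally show ?thesis .
qed

lemma cmat_scale_mv: "cmat_scale c A *v v = c *s (A *v v)"
  by (simp add: cmat_scale_def matrix_vector_mult_def vec_eq_iff sum_distrib_left mult.assoc)

lemma eigen_scalar:
  fixes G :: "complex^'n^'n"
  assumes "\<And>v. \<exists>c. G *v v = c *s v"
  shows "\<exists>c. \<forall>v. G *v v = c *s v"
proof -
  have col: "(G *v axis j 1) $ k = G $ k $ j" for j k
    by (simp add: matrix_vector_mult_def axis_def if_distrib cong: if_cong)
  have "\<forall>j. \<exists>c. G *v axis j 1 = c *s axis j 1" using assms by blast
  then obtain c where c0: "\<forall>j. G *v axis j 1 = c j *s axis j 1"
    by (rule choice[THEN exE])
  then have c: "\<And>j. G *v axis j 1 = c j *s axis j 1" by blast
  have offd: "G $ k $ j = 0" if "k \<noteq> j" for k j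
    using c[of j] col[of j k] that by (simp add: vec_eq_iff axis_def)
  have diag: "G $ j $ j = c j" for j
    using c[of j] col[of j j] by (simp add: vec_eq_iff axis_def)
  have eq: "c j = c k" for j k
  proof (cases "j = k")
    case False
    obtain d where d: "G *v (axis j 1 + axis k 1) = d *s (axis j 1 + axis k 1)"
      using assms by blast
    have "(G *v (axis j 1 + axis k 1)) $ j = c j" "(G *v (axis j 1 + axis k 1)) $ k = c k"
      using c[of j] c[of k] False by (simp_all add: matrix_vector_right_distrib axis_def)
    then show ?thesis using d False by (simp add: axis_def)
  qed simp
  fix j0
  show ?thesis
  proof (intro exI allI)
    fix v
    show "G *v v = c j0 *s v"
    proof (subst vec_eq_iff, intro allI)
      fix k
      have "(G *v v) $ k = (\<Sum>j\<in>UNIV. G$k$j * v$j)"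
        by (simp add: matrix_vector_mult_def)
      also have "\<dots> = (\<Sum>j\<in>UNIV. if j = k then c k * v $ k else 0)"
        by (rule sum.cong) (auto simp: offd diag)
      also have "\<dots> = c j0 * v $ k" using eq[of k j0] by simp
      finally show "(G *v v) $ k = (c j0 *s v) $ k" by simp
    qed
  qed
qed


locale three =
  fixes i1 i2 i3 :: "'n::finite"
  assumes d12: "i1 \<noteq> i2" and d13: "i1 \<noteq> i3" and d23: "i2 \<noteq> i3"
    and univ: "(UNIV::'n set) = {i1, i2, i3}"
begin

definition rw :: "complex^'n \<Rightarrow> complex^'n \<Rightarrow> complex^'n \<Rightarrow> complex^'n^'n" where
  "rw x y z = (\<chi> i. if i = i1 then x else if i = i2 then y else z)"

definition D :: "complex^'n \<Rightarrow> complex^'n \<Rightarrow> complex^'n \<Rightarrow> complex" where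
  "D x y z = det (rw x y z)"

lemma rw1: "rw x y z = (\<chi> i. if i = i1 then x else (if i = i2 then y else z))"
  by (simp add: rw_def)
lemma rw2: "rw x y z = (\<chi> i. if i = i2 then y else (if i = i1 then x else z))"
  using d12 by (simp add: rw_def vec_eq_iff)
lemma rw3: "rw x y z = (\<chi> i. if i = i3 then z else (if i = i1 then x else y))"
  using d12 d13 d23 univ by (auto simp add: rw_def vec_eq_iff)

lemma D_add1: "D (x + x') y z = D x y z + D x' y z"
  unfolding D_def rw1 using det_row_add[of i1 "\<lambda>_. x" "\<lambda>_. x'" "\<lambda>i. if i = i2 then y else z"] by simp
lemma D_add2: "D x (y + y') z = D x y z + D x y' z"
  unfolding D_def rw2 using det_row_add[of i2 "\<lambda>_. y" "\<lambda>_. y'" "\<lambda>i. if i = i1 then x else z"] by simp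
lemma D_add3: "D x y (z + z') = D x y z + D x y z'"
  unfolding D_def rw3 using det_row_add[of i3 "\<lambda>_. z" "\<lambda>_. z'" "\<lambda>i. if i = i1 then x else y"] by simp
lemma D_smul1: "D (c *s x) y z = c * D x y z"
  unfolding D_def rw1 using det_row_mul[of i1 c "\<lambda>_. x" "\<lambda>i. if i = i2 then y else z"] by simp
lemma D_smul2: "D x (c *s y) z = c * D x y z"
  unfolding D_def rw2 using det_row_mul[of i2 c "\<lambda>_. y" "\<lambda>i. if i = i1 then x else z"] by simp
lemma D_smul3: "D x y (c *s z) = c * D x y z"
  unfolding D_def rw3 using det_row_mul[of i3 c "\<lambda>_. z" "\<lambda>i. if i = i1 then x else y"] by simp

lemma D_alt12: "D x x z = 0"
  unfolding D_def by (rule det_identical_rows[OF d12]) (simp add: rw_def row_def vec_eq_iff d12)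
lemma D_alt13: "D x y x = 0"
  unfolding D_def by (rule det_identical_rows[OF d13]) (simp add: rw_def row_def vec_eq_iff d13 d23[symmetric])
lemma D_alt23: "D x y y = 0"
  unfolding D_def by (rule det_identical_rows[OF d23]) (simp add: rw_def row_def vec_eq_iff d13[symmetric] d23[symmetric] d12[symmetric])

lemma D_neg1: "D (- x) y z = - D x y z"
  using D_smul1[of "-1" x] by simp
lemma D_neg2: "D x (- y) z = - D x y z"
  using D_smul2[of x "-1" y] by simp
lemma D_neg3: "D x y (- z) = - D x y z"
  using D_smul3[of x y "-1" z] by simp
lemma D_diff1: "D (x - x') y z = D x y z - D x' y z"
  using D_add1[of x "- x'"] D_neg1 by simp
lemma D_diff2: "D x (y - y') z = D x y z - D x y' z"
  using D_add2[of x y "- y'"] D_neg2 by simp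
lemma D_diff3: "D x y (z - z') = D x y z - D x y z'"
  using D_add3[of x y z "- z'"] D_neg3 by simp
lemma D_zero[simp]: "D 0 y z = 0" "D x 0 z = 0" "D x y 0 = 0"
  using D_smul1[of 0 0 y z] D_smul2[of x 0 0 z] D_smul3[of x y 0 0] by simp_all

lemmas D_lin = D_add1 D_add2 D_add3 D_smul1 D_smul2 D_smul3 D_diff1 D_diff2 D_diff3 D_neg1 D_neg2 D_neg3

lemma D_swap12: "D y x z = - D x y z"
proof -
  have "D (x + y) (x + y) z = D x x z + D x y z + (D y x z + D y y z)"
    by (simp add: D_add1 D_add2)
  then show ?thesis using D_alt12[of "x + y" z] D_alt12[of x z] D_alt12[of y z]
    by (simp add: eq_neg_iff_add_eq_0 add.commute)
qed
lemma D_swap23: "D x z y = - D x y z"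
proof -
  have "D x (y + z) (y + z) = D x y y + D x y z + (D x z y + D x z z)"
    by (simp add: D_add3 D_add2)
  then show ?thesis using D_alt23[of x "y + z"] D_alt23[of x y] D_alt23[of x z]
    by (simp add: eq_neg_iff_add_eq_0 add.commute)
qed
lemma D_swap13: "D z y x = - D x y z"
proof -
  have "D (x + z) y (x + z) = D x y x + D x y z + (D z y x + D z y z)"
    by (simp add: D_add3 D_add1)
  then show ?thesis using D_alt13[of "x + z" y] D_alt13[of x y] D_alt13[of z y]
    by (simp add: eq_neg_iff_add_eq_0 add.commute)
qed

lemma D_e: "D (axis i1 1) (axis i2 1) (axis i3 1) = 1"
proof -
  have "rw (axis i1 1) (axis i2 1) (axis i3 1) = mat 1"
    using d12 d13 d23 univ by (auto simp: rw_def mat_def vec_eq_iff axis_def)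
  then show ?thesis by (simp add: D_def)
qed


lemma sum3: "(\<Sum>i\<in>UNIV. f i) = f i1 + f i2 + (f i3 :: complex)"
  using d12 d13 d23 by (simp add: univ)

lemma sum3v: "(\<Sum>i\<in>UNIV. f i) = f i1 + f i2 + (f i3 :: complex^'n)"
  using d12 d13 d23 by (simp add: univ)

lemma univ_cases: obtains "i = i1" | "i = i2" | "i = i3"
  using univ by auto

lemma expand: "(w::complex^'n) = w$i1 *s axis i1 1 + w$i2 *s axis i2 1 + w$i3 *s axis i3 1"
proof (subst vec_eq_iff, intro allI)
  fix i show "w $ i = (w$i1 *s axis i1 1 + w$i2 *s axis i2 1 + w$i3 *s axis i3 1) $ i"
    using d12 d13 d23 by (cases i rule: univ_cases) (auto simp: axis_def)
qed

lemma D_cramer: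
  assumes "D x y z \<noteq> 0"
  shows "\<exists>\<alpha> \<beta> \<gamma>. w = \<alpha> *s x + \<beta> *s y + \<gamma> *s z"
proof -
  have "invertible (transpose (rw x y z))"
    using assms by (simp add: D_def invertible_det_nz)
  then have "surj ((*v) (transpose (rw x y z)))"
    using invertible_eq_bij bij_is_surj by blast
  then obtain c where c: "transpose (rw x y z) *v c = w" by (metis surjD)
  have "transpose (rw x y z) *v c = c$i1 *s x + c$i2 *s y + c$i3 *s z"
    unfolding matrix_vector_column transpose_transpose sum3v
    using d12 d13 d23 by (simp add: rw_def)
  then show ?thesis using c by metis
qed

lemma D_dep:
  assumes "\<alpha> *s x + \<beta> *s y + \<gamma> *s z = 0" and "\<alpha> \<noteq> 0 \<or> \<beta> \<noteq> 0 \<or> \<gamma> \<noteq> 0"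
  shows "D x y z = 0"
proof -
  have h: "\<alpha> * x$i + \<beta> * y$i + \<gamma> * z$i = 0" for i
    using arg_cong[OF assms(1), of "\<lambda>v. v$i"] by simp
  consider "\<alpha> \<noteq> 0" | "\<beta> \<noteq> 0" | "\<gamma> \<noteq> 0" using assms(2) by blast
  then show ?thesis
  proof cases
    case 1
    have "x = (- \<beta>/\<alpha>) *s y + (- \<gamma>/\<alpha>) *s z"
    proof (subst vec_eq_iff, intro allI)
      fix i
      have "\<alpha> * x$i = - (\<beta> * y$i + \<gamma> * z$i)" by (rule iffD2[OF eq_neg_iff_add_eq_0]) (use h[of i] in \<open>simp add: algebra_simps\<close>)
      then show "x $ i = ((- \<beta>/\<alpha>) *s y + (- \<gamma>/\<alpha>) *s z) $ i" using 1 by (simp add: field_simps)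
    qed
    then show ?thesis by (simp add: D_lin D_alt12 D_alt13)
  next
    case 2
    have "y = (- \<alpha>/\<beta>) *s x + (- \<gamma>/\<beta>) *s z"
    proof (subst vec_eq_iff, intro allI)
      fix i
      have "\<beta> * y$i = - (\<alpha> * x$i + \<gamma> * z$i)" by (rule iffD2[OF eq_neg_iff_add_eq_0]) (use h[of i] in \<open>simp add: algebra_simps\<close>)
      then show "y $ i = ((- \<alpha>/\<beta>) *s x + (- \<gamma>/\<beta>) *s z) $ i" using 2 by (simp add: field_simps)
    qed
    then show ?thesis by (simp add: D_lin D_alt12 D_alt23)
  next
    case 3
    have "z = (- \<alpha>/\<gamma>) *s x + (- \<beta>/\<gamma>) *s y"
    proof (subst vec_eq_iff, intro allI)
      fix i
      have "\<gamma> * z$i = - (\<alpha> * x$i + \<beta> * y$i)" by (rule iffD2[OF eq_neg_iff_add_eq_0]) (use h[of i] in \<open>simp add: algebra_simps\<close>)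
      then show "z $ i = ((- \<alpha>/\<gamma>) *s x + (- \<beta>/\<gamma>) *s y) $ i" using 3 by (simp add: field_simps)
    qed
    then show ?thesis by (simp add: D_lin D_alt13 D_alt23)
  qed
qed

lemma D_ne:
  assumes "y \<noteq> 0"
  shows "\<exists>p q. D p q y \<noteq> 0"
proof -
  let ?e1 = "axis i1 1 :: complex^'n" and ?e2 = "axis i2 1 :: complex^'n" and ?e3 = "axis i3 1 :: complex^'n"
  have a: "D ?e1 ?e2 y = y$i3"
    by (subst expand[of y]) (simp add: D_lin D_alt13 D_alt23 D_e)
  have e231: "D ?e2 ?e3 ?e1 = 1" using D_swap13[of ?e1 ?e3 ?e2] D_swap23[of ?e1 ?e2 ?e3] D_e by simp
  have e312: "D ?e3 ?e1 ?e2 = 1" using D_swap12[of ?e1 ?e3 ?e2] D_swap23[of ?e1 ?e2 ?e3] D_e by simp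
  have b: "D ?e2 ?e3 y = y$i1"
    by (subst expand[of y]) (simp add: D_lin D_alt13 D_alt23 e231)
  have c: "D ?e3 ?e1 y = y$i2"
    by (subst expand[of y]) (simp add: D_lin D_alt13 D_alt23 e312)
  have "y$i1 \<noteq> 0 \<or> y$i2 \<noteq> 0 \<or> y$i3 \<noteq> 0"
    using assms expand[of y] by auto
  then show ?thesis using a b c by metis
qed

definition cr :: "complex^'n \<Rightarrow> complex^'n \<Rightarrow> complex^'n" where
  "cr x y = (\<chi> k. D x y (axis k 1))"

lemma bd_cr: "bd (cr x y) z = D x y z"
proof -
  have "D x y z = z$i1 * D x y (axis i1 1) + z$i2 * D x y (axis i2 1) + z$i3 * D x y (axis i3 1)"
    by (subst expand[of z]) (simp add: D_lin)
  then show ?thesis by (simp add: bd_def cr_def sum3 mult.commute)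
qed

lemma D_par:
  assumes "y \<noteq> 0" and "\<And>x. D x a y = 0"
  shows "\<exists>\<beta>. a = \<beta> *s y"
proof -
  obtain p q where pq: "D p q y \<noteq> 0" using D_ne assms(1) by blast
  obtain \<alpha> \<beta> \<gamma> where a: "a = \<alpha> *s p + \<beta> *s q + \<gamma> *s y"
    using D_cramer[OF pq] by blast
  have "D q a y = - \<alpha> * D p q y" using D_swap12[of p q y]
    by (simp add: a D_lin D_alt12 D_alt13 D_alt23)
  then have "\<alpha> = 0" using assms(2)[of q] pq by simp
  have "D p a y = \<beta> * D p q y"
    by (simp add: a D_lin D_alt12 D_alt13 D_alt23)
  then have "\<beta> = 0" using assms(2)[of p] pq by simp
  show ?thesis using a \<open>\<alpha> = 0\<close> \<open>\<beta> = 0\<close> by auto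
qed


lemma orth:
  assumes "D a b c \<noteq> 0" "bd x a = 0" "bd x b = 0" "bd x c = 0"
  shows "x = 0"
proof (rule bd_zero)
  fix w
  obtain \<alpha> \<beta> \<gamma> where "w = \<alpha> *s a + \<beta> *s b + \<gamma> *s c" using D_cramer[OF assms(1)] by blast
  then have "bd x w = 0" using assms(2-4) by (simp add: bd_add2 bd_smul2)
  then show "bd w x = 0" by (simp add: bd_comm)
qed

lemma rank1:
  assumes sym: "symmetric_mat N" and "N *v v0 = 0" "N *v z = 0" "D v0 z r \<noteq> 0"
  shows "cr v0 z \<noteq> 0 \<and> (\<forall>w. \<exists>c. N *v w = c *s cr v0 z)"
proof -
  let ?y = "cr v0 z"
  have y1: "bd ?y v0 = 0" "bd ?y z = 0" and y3: "bd ?y r \<noteq> 0"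
    using assms(4) by (simp_all add: bd_cr D_alt13 D_alt23)
  have "?y \<noteq> 0" using y3 by auto
  moreover have "\<exists>c. N *v w = c *s ?y" for w
  proof -
    let ?x = "N *v w"
    let ?c = "bd ?x r / bd ?y r"
    have a: "bd ?x v0 = 0" using sym_bd[OF sym, of v0 w] assms(2) by (simp add: bd_comm)
    have b: "bd ?x z = 0" using sym_bd[OF sym, of z w] assms(3) by (simp add: bd_comm)
    have "?x - ?c *s ?y = 0"
      by (rule orth[OF assms(4)]) (use a b y1 y3 in \<open>simp_all add: bd_diff1 bd_smul1\<close>)
    then show ?thesis by (metis eq_iff_diff_eq_0)
  qed
  ultimately show ?thesis by blast
qed

lemma quadD:
  assumes "\<And>t. t \<noteq> 0 \<Longrightarrow> D (a + t *s a') (b + t *s b') n = 0"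
  shows "D a b n = 0"
proof -
  have ex: "D (a + t *s a') (b + t *s b') n = D a b n + t * (D a' b n + D a b' n) + t * t * D a' b' n" for t
    by (simp add: D_lin algebra_simps)
  define \<alpha> where "\<alpha> = D a b n"
  define \<beta> where "\<beta> = D a' b n + D a b' n"
  define \<gamma> where "\<gamma> = D a' b' n"
  have e1: "\<alpha> + \<beta> + \<gamma> = 0" using assms[of 1] ex[of 1] by (simp add: \<alpha>_def \<beta>_def \<gamma>_def algebra_simps)
  have e2: "\<alpha> - \<beta> + \<gamma> = 0" using assms[of "-1"] ex[of "-1"] by (simp add: \<alpha>_def \<beta>_def \<gamma>_def algebra_simps)
  have e3: "\<alpha> + 2 * \<beta> + 4 * \<gamma> = 0" using assms[of 2] ex[of 2] by (simp add: \<alpha>_def \<beta>_def \<gamma>_def algebra_simps)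
  have eq: "\<alpha> = (\<alpha> + \<beta> + \<gamma>) + (\<alpha> - \<beta> + \<gamma>) / 3 - (\<alpha> + 2 * \<beta> + 4 * \<gamma>) / 3"
    by (simp add: field_simps)
  have "\<alpha> = 0" using eq unfolding e1 e2 e3 by simp
  then show ?thesis by (simp add: \<alpha>_def)
qed

end

lemma quad_nz:
  fixes A :: "complex^'n^'n"
  assumes "symmetric_mat A" "A \<noteq> 0"
  shows "\<exists>v. bd v (A *v v) \<noteq> 0"
proof (rule ccontr)
  assume "\<not> ?thesis"
  then have h: "bd v (A *v v) = 0" for v by blast
  have "bd v (A *v w) = 0" for v w
  proof -
    have "bd (v + w) (A *v (v + w)) = bd v (A *v v) + bd w (A *v w) + 2 * bd v (A *v w)"
      using sym_bd[OF assms(1), of w v] by (simp add: matrix_vector_right_distrib bd_add1 bd_add2 bd_comm[of "A *v v" w] bd_comm[of "A *v w" v])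
    then show ?thesis using h by simp
  qed
  then have "A *v w = 0" for w by (metis bd_zero)
  then have "A = 0" by (metis matrix_eq matrix_vector_mult_0)
  then show False using assms(2) by simp
qed

lemma sym_rank1:
  fixes S N :: "complex^'n^'n"
  assumes sS: "symmetric_mat S" and sN: "symmetric_mat N" and "y \<noteq> 0"
    and hS: "\<And>w. \<exists>c. S *v w = c *s y" and hN: "\<And>w. \<exists>c. N *v w = c *s y" and "N \<noteq> 0"
  shows "\<exists>\<kappa>. \<forall>w. S *v w = \<kappa> *s (N *v w)"
proof -
  obtain x0 where x0: "N *v x0 \<noteq> 0" using assms(6) by (metis matrix_eq matrix_vector_mult_0)
  obtain n0 where n0: "N *v x0 = n0 *s y" using hN by blast
  obtain s0 where s0: "S *v x0 = s0 *s y" using hS by blast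
  have n0nz: "n0 \<noteq> 0" using x0 n0 by auto
  have xy: "bd x0 y \<noteq> 0"
  proof
    assume xy0: "bd x0 y = 0"
    have "bd w y = 0" for w
    proof -
      obtain c where c: "N *v w = c *s y" using hN by blast
      have "n0 * bd w y = bd w (N *v x0)" by (simp add: n0 bd_smul2)
      also have "\<dots> = bd (N *v w) x0" by (rule sym_bd[OF sN])
      also have "\<dots> = 0" by (simp add: c bd_smul1 bd_comm[of y] xy0)
      finally show ?thesis using n0nz by simp
    qed
    then show False using assms(3) by (metis bd_comm bd_zero)
  qed
  define \<kappa> where "\<kappa> = s0 / n0"
  show ?thesis
  proof (intro exI allI)
    fix w
    obtain a where a: "S *v w = a *s y" using hS by blast
    obtain b where b: "N *v w = b *s y" using hN by blast
    have "bd x0 (S *v w) - \<kappa> * bd x0 (N *v w) = bd (S *v x0) w - \<kappa> * bd (N *v x0) w"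
      using sym_bd[OF sS, of x0 w] sym_bd[OF sN, of x0 w] by simp
    also have "\<dots> = 0" using n0nz by (simp add: s0 n0 bd_smul1 \<kappa>_def)
    finally have "(a - \<kappa> * b) * bd x0 y = 0"
      by (simp add: a b bd_smul2 algebra_simps)
    then have "a = \<kappa> * b" using xy by simp
    then show "S *v w = \<kappa> *s (N *v w)" by (simp add: a b)
  qed
qed


lemma span1: "x \<in> cmat.span {a} \<longleftrightarrow> (\<exists>\<alpha>. x = cmat_scale \<alpha> a)"
  by (auto simp: cmat.span_singleton)

lemma span2: "x \<in> cmat.span {a, b} \<longleftrightarrow> (\<exists>\<alpha> \<beta>. x = cmat_scale \<alpha> a + cmat_scale \<beta> b)"
  unfolding cmat.span_insert[of a] span1 by (auto simp: diff_eq_eq) (metis add.commute)+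

lemma span3: "x \<in> cmat.span {a, b, c} \<longleftrightarrow> (\<exists>\<alpha> \<beta> \<gamma>. x = cmat_scale \<alpha> a + cmat_scale \<beta> b + cmat_scale \<gamma> c)"
  unfolding cmat.span_insert[of a] span2 by (auto simp: diff_eq_eq) (metis add.commute add.assoc)+

lemma cmat_comb_mv: "(cmat_scale \<alpha> a + B) *v v = \<alpha> *s (a *v v) + B *v v"
  by (simp add: matrix_vector_mult_add_rdistrib cmat_scale_mv)


lemma fill_span:
  assumes dimW: "cmat.dim W = card B" and pos: "card B > 0" and BW: "B \<subseteq> W" and ind: "cmat.independent B"
  shows "W \<subseteq> cmat.span B"
proof
  fix X assume XW: "X \<in> W"
  show "X \<in> cmat.span B"
  proof (rule ccontr)
    assume Xn: "X \<notin> cmat.span B"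
    obtain C where C: "C \<subseteq> W" "cmat.independent C" "W \<subseteq> cmat.span C" "card C = cmat.dim W"
      by (rule cmat.basis_exists)
    have fB: "finite B" using pos card_gt_0_iff by blast
    have fC: "finite C" using C(4) dimW pos card_gt_0_iff by metis
    have "cmat.independent (insert X B)" by (rule cmat.independent_insertI[OF Xn ind])
    moreover have "insert X B \<subseteq> cmat.span C" using C(3) XW BW by auto
    ultimately have "card (insert X B) \<le> card C" using cmat.independent_span_bound[OF fC] by blast
    moreover have "X \<notin> B" using Xn cmat.span_base by blast
    ultimately show False using fB C(4) dimW by simp
  qed
qed

lemma poly_quad: "poly [:a, b, c:] t = a + t * (b + t * c)"
  by simp

lemma (in three) main3:
  fixes W :: "(complex^'n^'n) set"
  assumes sub: "cmat.subspace W" and dimW: "cmat.dim W = 3"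
    and symW: "\<forall>A\<in>W. symmetric_mat A" and A0W: "A0 \<in> W" and inv: "invertible A0"
    and bad: "\<forall>v. \<exists>A\<in>W. A \<noteq> 0 \<and> A *v v = 0"
  shows False
proof -
  obtain A0' where A0': "A0 ** A0' = mat 1" "A0' ** A0 = mat 1"
    using inv unfolding invertible_def by blast
  have A0li: "A0' *v (A0 *v v) = v" for v by (simp add: matrix_vector_mul_assoc A0')
  have A0ri: "A0 *v (A0' *v v) = v" for v by (simp add: matrix_vector_mul_assoc A0')
  have A0inj: "v = 0" if "A0 *v v = 0" for v using A0li[of v] that by simp
  have A0ne: "A0 \<noteq> 0"
  proof
    assume "A0 = 0"
    then have "(axis i1 1 :: complex^'n) = 0" using A0ri[of "axis i1 1"] by simp
    then show False by (simp add: axis_eq_0_iff)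
  qed
  have sym0: "symmetric_mat A0" using symW A0W by blast
  have "\<not> W \<subseteq> cmat.span {A0}"
  proof
    assume "W \<subseteq> cmat.span {A0}"
    then have "cmat.dim W \<le> card {A0}" by (rule cmat.dim_le_card) simp
    then show False using dimW by simp
  qed
  then obtain A1 where A1W: "A1 \<in> W" and A1n: "A1 \<notin> cmat.span {A0}" by blast
  have "\<exists>v1 r. D (A0 *v v1) (A1 *v v1) r \<noteq> 0"
  proof (rule ccontr)
    assume "\<not> ?thesis"
    then have h: "D (A0 *v v) (A1 *v v) r = 0" for v r by blast
    have "\<exists>c. (A0' ** A1) *v v = c *s v" for v
    proof (cases "v = 0")
      case True then show ?thesis by auto
    next
      case False
      then have "A0 *v v \<noteq> 0" using A0inj by blast
      moreover have "D x (A1 *v v) (A0 *v v) = 0" for x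
        using h[of v x] D_swap13[of "A0 *v v" "A1 *v v" x] by simp
      ultimately obtain c where "A1 *v v = c *s (A0 *v v)" using D_par by blast
      then have "(A0' ** A1) *v v = c *s v"
        by (simp add: matrix_vector_mul_assoc[symmetric] vector_scalar_commute A0li)
      then show ?thesis by blast
    qed
    then obtain c where c: "\<forall>v. (A0' ** A1) *v v = c *s v" using eigen_scalar[of "A0' ** A1"] by blast
    have "A1 *v v = cmat_scale c A0 *v v" for v
    proof -
      have "A1 *v v = A0 *v ((A0' ** A1) *v v)" by (simp add: matrix_vector_mul_assoc[symmetric] A0ri)
      also have "\<dots> = cmat_scale c A0 *v v" by (simp add: c vector_scalar_commute cmat_scale_mv)
      finally show ?thesis .
    qed
    then have "A1 = cmat_scale c A0" by (simp add: matrix_eq)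
    then show False using A1n by (auto simp: span1)
  qed
  then obtain v1 r where vr: "D (A0 *v v1) (A1 *v v1) r \<noteq> 0" by blast
  obtain v2 where v2: "bd v2 (A0 *v v2) \<noteq> 0" using quad_nz[OF sym0 A0ne] by blast
  define f0 where "f0 = D (A0 *v v1) (A1 *v v1) r"
  define f1 where "f1 = D (A0 *v v2) (A1 *v v1) r + D (A0 *v v1) (A1 *v v2) r"
  define f2 where "f2 = D (A0 *v v2) (A1 *v v2) r"
  define g0 where "g0 = bd v1 (A0 *v v1)"
  define g1 where "g1 = bd v1 (A0 *v v2) + bd v2 (A0 *v v1)"
  define g2 where "g2 = bd v2 (A0 *v v2)"
  have F: "D (A0 *v (v1 + t *s v2)) (A1 *v (v1 + t *s v2)) r = f0 + t * (f1 + t * f2)" for t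
    by (simp add: f0_def f1_def f2_def matrix_vector_right_distrib vector_scalar_commute D_lin algebra_simps)
  have Gq: "bd (v1 + t *s v2) (A0 *v (v1 + t *s v2)) = g0 + t * (g1 + t * g2)" for t
    by (simp add: g0_def g1_def g2_def matrix_vector_right_distrib vector_scalar_commute
        bd_add1 bd_add2 bd_smul1 bd_smul2 algebra_simps)
  let ?p = "[:f0, f1, f2:] * [:g0, g1, g2:]"
  have pf: "[:f0, f1, f2:] \<noteq> 0" using vr by (simp add: f0_def)
  have pg: "[:g0, g1, g2:] \<noteq> 0" using v2 by (simp add: g2_def)
  have "?p \<noteq> 0" by (rule no_zero_divisors[OF pf pg])
  then have "finite {t. poly ?p t = 0}" by (rule poly_roots_finite)
  then obtain t where "t \<notin> {t. poly ?p t = 0}"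
    using ex_new_if_finite[OF infinite_UNIV_char_0] by blast
  then have "poly [:f0, f1, f2:] t * poly [:g0, g1, g2:] t \<noteq> 0"
    by (simp only: mem_Collect_eq poly_mult not_False_eq_True)
  then have "poly [:f0, f1, f2:] t \<noteq> 0" "poly [:g0, g1, g2:] t \<noteq> 0"
    by (metis mult_zero_left, metis mult_zero_right)
  then have tt: "D (A0 *v (v1 + t *s v2)) (A1 *v (v1 + t *s v2)) r \<noteq> 0"
      "bd (v1 + t *s v2) (A0 *v (v1 + t *s v2)) \<noteq> 0"
    unfolding F Gq poly_quad by auto
  define v0 where "v0 = v1 + t *s v2"
  have v0a: "D (A0 *v v0) (A1 *v v0) r \<noteq> 0" and v0b: "bd v0 (A0 *v v0) \<noteq> 0"
    using tt by (simp_all add: v0_def)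
  obtain N where NW: "N \<in> W" "N \<noteq> 0" "N *v v0 = 0" using bad by blast
  let ?a = "A0 *v v0" let ?b = "A1 *v v0"
  have Nn: "N \<notin> cmat.span {A0, A1}"
  proof
    assume "N \<in> cmat.span {A0, A1}"
    then obtain \<alpha> \<beta> where N: "N = cmat_scale \<alpha> A0 + cmat_scale \<beta> A1" by (auto simp: span2)
    then have "\<alpha> *s ?a + \<beta> *s ?b + 0 *s r = 0" using NW(3)
      by (simp add: matrix_vector_mult_add_rdistrib cmat_scale_mv)
    moreover have "\<alpha> \<noteq> 0 \<or> \<beta> \<noteq> 0" using N NW(2) by auto
    ultimately have "D ?a ?b r = 0" using D_dep by blast
    then show False using v0a by simp
  qed
  have A1A0: "A1 \<noteq> A0" using A1n cmat.span_base[of A0 "{A0}"] by auto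
  have NA0: "N \<noteq> A0" "N \<noteq> A1" using Nn cmat.span_base[of _ "{A0, A1}"] by auto
  have indep: "cmat.independent {N, A1, A0}"
  proof (intro cmat.independent_insertI)
    show "N \<notin> cmat.span {A1, A0}" using Nn by (simp add: insert_commute)
    show "A1 \<notin> cmat.span {A0}" by (rule A1n)
    show "A0 \<notin> cmat.span {}" using A0ne by simp
  qed (rule cmat.independent_empty)
  have Wsp: "W \<subseteq> cmat.span {N, A1, A0}"
  proof (rule fill_span)
    show "{N, A1, A0} \<subseteq> W" using NW A1W A0W by auto
    show "cmat.dim W = card {N, A1, A0}" using dimW A1A0 NA0 by simp
  qed (use indep A1A0 NA0 in auto)
  have Bad3: "D (A0 *v v) (A1 *v v) (N *v v) = 0" for v
  proof -
    obtain B where B: "B \<in> W" "B \<noteq> 0" "B *v v = 0" using bad by blast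
    then obtain \<gamma> \<beta> \<alpha> where Bc: "B = cmat_scale \<gamma> N + cmat_scale \<beta> A1 + cmat_scale \<alpha> A0"
    proof -
      have "B \<in> cmat.span {N, A1, A0}" using Wsp B(1) by blast
      then show ?thesis using that unfolding span3 by blast
    qed
    have "\<alpha> *s (A0 *v v) + \<beta> *s (A1 *v v) + \<gamma> *s (N *v v) = 0"
      using B(3) by (simp add: Bc matrix_vector_mult_add_rdistrib cmat_scale_mv algebra_simps)
    moreover have "\<alpha> \<noteq> 0 \<or> \<beta> \<noteq> 0 \<or> \<gamma> \<noteq> 0" using Bc B(2) by auto
    ultimately show ?thesis by (rule D_dep)
  qed
  have symN: "symmetric_mat N" using symW NW by blast
  define z where "z = cr ?a ?b"
  have DN: "D ?a ?b (N *v w) = 0" for w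
  proof (rule quadD[of _ "A0 *v w" _ "A1 *v w"])
    fix t :: complex assume "t \<noteq> 0"
    have "D (A0 *v (v0 + t *s w)) (A1 *v (v0 + t *s w)) (N *v (v0 + t *s w)) = 0" by (rule Bad3)
    then have "t * D (?a + t *s (A0 *v w)) (?b + t *s (A1 *v w)) (N *v w) = 0"
      using NW(3) by (simp add: matrix_vector_right_distrib vector_scalar_commute D_smul3)
    then show "D (?a + t *s (A0 *v w)) (?b + t *s (A1 *v w)) (N *v w) = 0" using \<open>t \<noteq> 0\<close> by simp
  qed
  have Nz: "N *v z = 0"
  proof (rule bd_zero)
    fix w
    have "bd w (N *v z) = bd (N *v w) z" by (rule sym_bd[OF symN])
    also have "\<dots> = bd z (N *v w)" by (rule bd_comm)
    also have "\<dots> = 0" by (simp add: z_def bd_cr DN)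
    finally show "bd w (N *v z) = 0" .
  qed
  have zne: "z \<noteq> 0" using v0a bd_cr[of ?a ?b r] by (auto simp: z_def)
  have v0ne: "v0 \<noteq> 0" using v0b by auto
  have "\<exists>r'. D v0 z r' \<noteq> 0"
  proof (rule ccontr)
    assume "\<not> ?thesis"
    then have "D x z v0 = 0" for x using D_swap13[of v0 z x] by auto
    then obtain \<beta> where zb: "z = \<beta> *s v0" using D_par[OF v0ne] by blast
    have "bd z ?a = 0" by (simp add: z_def bd_cr D_alt13)
    then have "\<beta> * bd v0 ?a = 0" by (simp add: zb bd_smul1)
    then have "\<beta> = 0" using v0b by simp
    then show False using zne zb by simp
  qed
  then obtain r' where r': "D v0 z r' \<noteq> 0" by blast
  define y where "y = cr v0 z"
  have yne: "y \<noteq> 0" and Ny: "\<forall>w. \<exists>c. N *v w = c *s y"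
    using rank1[OF symN NW(3) Nz r'] by (simp_all add: y_def)
  have E1: "D (A0 *v v) (A1 *v v) y = 0" if "N *v v \<noteq> 0" for v
  proof -
    obtain c where c: "N *v v = c *s y" using Ny by blast
    have "c \<noteq> 0" using that c by auto
    have "c * D (A0 *v v) (A1 *v v) y = 0" using Bad3[of v] by (simp add: c D_smul3)
    then show ?thesis using \<open>c \<noteq> 0\<close> by simp
  qed
  obtain x0 where x0: "N *v x0 \<noteq> 0" using NW(2) by (metis matrix_eq matrix_vector_mult_0)
  have E: "D (A0 *v v) (A1 *v v) y = 0" for v
  proof (cases "N *v v = 0")
    case False then show ?thesis by (rule E1)
  next
    case True
    show ?thesis
    proof (rule quadD[of _ "A0 *v x0" _ "A1 *v x0"])
      fix t :: complex assume "t \<noteq> 0"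
      have "N *v (v + t *s x0) \<noteq> 0" using True x0 \<open>t \<noteq> 0\<close>
        by (simp add: matrix_vector_right_distrib vector_scalar_commute)
      then have "D (A0 *v (v + t *s x0)) (A1 *v (v + t *s x0)) y = 0" by (rule E1)
      then show "D (A0 *v v + t *s (A0 *v x0)) (A1 *v v + t *s (A1 *v x0)) y = 0"
        by (simp add: matrix_vector_right_distrib vector_scalar_commute)
    qed
  qed
  have polar: "D (A0 *v v) (A1 *v w) y + D (A0 *v w) (A1 *v v) y = 0" for v w
  proof -
    have "D (A0 *v (v + w)) (A1 *v (v + w)) y = D (A0 *v v) (A1 *v v) y + D (A0 *v w) (A1 *v w) y
        + (D (A0 *v v) (A1 *v w) y + D (A0 *v w) (A1 *v v) y)"
      by (simp add: matrix_vector_right_distrib D_add1 D_add2)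
    then show ?thesis using E[of "v + w"] E[of v] E[of w] by simp
  qed
  define u where "u = A0' *v y"
  have A0u: "A0 *v u = y" by (simp add: u_def A0ri)
  have "D x (A1 *v u) y = 0" for x
  proof -
    have "D (A0 *v (A0' *v x)) (A1 *v u) y = 0" using polar[of u "A0' *v x"] by (simp add: A0u D_alt13)
    then show ?thesis by (simp add: A0ri)
  qed
  then obtain \<beta> where A1u: "A1 *v u = \<beta> *s y" using D_par[OF yne] by blast
  define B where "B = A1 - cmat_scale \<beta> A0"
  have Bv: "B *v v = A1 *v v - \<beta> *s (A0 *v v)" for v
    by (simp add: B_def matrix_vector_mult_diff_rdistrib cmat_scale_mv)
  have Bu: "B *v u = 0" by (simp add: Bv A1u A0u)
  have polarB: "D (A0 *v v) (B *v w) y + D (A0 *v w) (B *v v) y = 0" for v w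
    using polar[of v w] D_swap12[of "A0 *v v" "A0 *v w" y] by (simp add: Bv D_diff2 D_smul2 algebra_simps)
  define G where "G = B ** A0'"
  have GA0: "G *v (A0 *v v) = B *v v" for v by (simp add: G_def matrix_vector_mul_assoc[symmetric] A0li)
  have polarG: "D a (G *v c) y + D c (G *v a) y = 0" for a c
  proof -
    have "D (A0 *v (A0' *v a)) (G *v (A0 *v (A0' *v c))) y + D (A0 *v (A0' *v c)) (G *v (A0 *v (A0' *v a))) y = 0"
      unfolding GA0 by (rule polarB)
    then show ?thesis by (simp add: A0ri)
  qed
  have Gy: "G *v y = 0" using GA0[of u] by (simp add: A0u Bu)
  obtain p q where pq: "D p q y \<noteq> 0" using D_ne[OF yne] by blast
  obtain a1 b1 c1 where Gp: "G *v p = a1 *s p + b1 *s q + c1 *s y" using D_cramer[OF pq] by blast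
  obtain a2 b2 c2 where Gq: "G *v q = a2 *s p + b2 *s q + c2 *s y" using D_cramer[OF pq] by blast
  have "b1 = 0"
  proof -
    have "2 * (b1 * D p q y) = 0" using polarG[of p p] by (simp add: Gp D_lin D_alt12 D_alt13 D_alt23)
    then show ?thesis using pq by simp
  qed
  have "a2 = 0"
  proof -
    have "2 * (a2 * D q p y) = 0" using polarG[of q q] by (simp add: Gq D_lin D_alt12 D_alt13 D_alt23)
    then show ?thesis using pq D_swap12[of p q y] by simp
  qed
  have "a1 = b2"
  proof -
    have "b2 * D p q y + a1 * D q p y = 0" using polarG[of p q] \<open>b1 = 0\<close> \<open>a2 = 0\<close>
      by (simp add: Gp Gq D_lin D_alt12 D_alt13 D_alt23)
    then have "(b2 - a1) * D p q y = 0" using D_swap12[of p q y] by (simp add: algebra_simps)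
    then show ?thesis using pq by simp
  qed
  have Gx: "\<exists>c. G *v x - a1 *s x = c *s y" for x
  proof -
    obtain \<alpha> \<beta>' \<gamma> where x: "x = \<alpha> *s p + \<beta>' *s q + \<gamma> *s y" using D_cramer[OF pq] by blast
    have "G *v x - a1 *s x = (\<alpha> * c1 + \<beta>' * c2 - a1 * \<gamma>) *s y"
      using \<open>b1 = 0\<close> \<open>a2 = 0\<close> \<open>a1 = b2\<close>
      by (simp add: x matrix_vector_right_distrib vector_scalar_commute Gp Gq Gy vec_eq_iff algebra_simps)
    then show ?thesis by blast
  qed
  define S where "S = A1 - cmat_scale (\<beta> + a1) A0"
  have SW: "S \<in> W" unfolding S_def
    by (intro cmat.subspace_diff[OF sub A1W] cmat.subspace_scale[OF sub A0W])
  have hS: "\<exists>c. S *v w = c *s y" for w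
  proof -
    have "S *v w = G *v (A0 *v w) - a1 *s (A0 *v w)"
      by (simp add: S_def GA0 Bv matrix_vector_mult_diff_rdistrib cmat_scale_mv vec_eq_iff algebra_simps)
    then show ?thesis using Gx by simp
  qed
  obtain \<kappa> where \<kappa>: "\<forall>w. S *v w = \<kappa> *s (N *v w)"
    using sym_rank1[OF _ symN yne hS _ NW(2)] symW SW Ny by blast
  have A1eq: "A1 = cmat_scale (\<beta> + a1) A0 + cmat_scale \<kappa> N"
  proof (rule matrix_eq[THEN iffD2], intro allI)
    fix w
    have "A1 *v w - (\<beta> + a1) *s (A0 *v w) = \<kappa> *s (N *v w)"
      using \<kappa> by (simp add: S_def matrix_vector_mult_diff_rdistrib cmat_scale_mv)
    then show "A1 *v w = (cmat_scale (\<beta> + a1) A0 + cmat_scale \<kappa> N) *v w"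
      by (simp add: matrix_vector_mult_add_rdistrib cmat_scale_mv diff_eq_eq add.commute)
  qed
  show False
  proof (cases "\<kappa> = 0")
    case True
    then have "A1 = cmat_scale (\<beta> + a1) A0" using A1eq by simp
    then show False using A1n by (auto simp: span1)
  next
    case False
    have "N = cmat_scale (- (\<beta> + a1) / \<kappa>) A0 + cmat_scale (1 / \<kappa>) A1"
      using A1eq False by (simp add: cmat_scale_def vec_eq_iff field_simps)
    then have "N \<in> cmat.span {A0, A1}" by (auto simp: span2)
    then show False using Nn by simp
  qed
qed


lemma inv_facts:
  fixes A0 :: "complex^'n^'n"
  assumes "invertible A0"
  obtains A0' where "\<And>v. A0' *v (A0 *v v) = v" "\<And>v. A0 *v (A0' *v v) = v"
proof -
  obtain A0' where A0': "A0 ** A0' = mat 1" "A0' ** A0 = mat 1"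
    using assms unfolding invertible_def by blast
  show ?thesis by (rule that[of A0']) (simp_all add: matrix_vector_mul_assoc A0')
qed

lemma main1:
  fixes W :: "(complex^'n^'n) set"
  assumes dimW: "cmat.dim W = 1" and A0W: "A0 \<in> W" and inv: "invertible A0"
    and bad: "\<forall>v. \<exists>A\<in>W. A \<noteq> 0 \<and> A *v v = 0"
  shows False
proof -
  obtain A0' where A0li: "\<And>v. A0' *v (A0 *v v) = v" and A0ri: "\<And>v. A0 *v (A0' *v v) = v"
    using inv_facts[OF inv] by blast
  have A0ne: "A0 \<noteq> 0"
  proof
    assume "A0 = 0"
    then have "(axis undefined 1 :: complex^'n) = 0" using A0ri[of "axis undefined 1"] by simp
    then show False by (simp add: axis_eq_0_iff)
  qed
  have Wsp: "W \<subseteq> cmat.span {A0}"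
    by (rule fill_span) (use dimW A0W A0ne in auto)
  obtain B where B: "B \<in> W" "B \<noteq> 0" "B *v axis undefined 1 = 0" using bad by blast
  then obtain c where c: "B = cmat_scale c A0" using Wsp span1 by blast
  have "c \<noteq> 0" using B(2) c by auto
  then have "A0 *v axis undefined 1 = 0" using B(3) c by (simp add: cmat_scale_mv)
  then have "(axis undefined 1 :: complex^'n) = 0" using A0li[of "axis undefined 1"] by simp
  then show False by (simp add: axis_eq_0_iff)
qed

lemma main2:
  fixes W :: "(complex^'n^'n) set"
  assumes dimW: "cmat.dim W = 2" and A0W: "A0 \<in> W" and inv: "invertible A0"
    and bad: "\<forall>v. \<exists>A\<in>W. A \<noteq> 0 \<and> A *v v = 0"
  shows False
proof -
  obtain A0' where A0li: "\<And>v. A0' *v (A0 *v v) = v" and A0ri: "\<And>v. A0 *v (A0' *v v) = v"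
    using inv_facts[OF inv] by blast
  have A0ne: "A0 \<noteq> 0"
  proof
    assume "A0 = 0"
    then have "(axis undefined 1 :: complex^'n) = 0" using A0ri[of "axis undefined 1"] by simp
    then show False by (simp add: axis_eq_0_iff)
  qed
  have "\<not> W \<subseteq> cmat.span {A0}"
  proof
    assume "W \<subseteq> cmat.span {A0}"
    then have "cmat.dim W \<le> card {A0}" by (rule cmat.dim_le_card) simp
    then show False using dimW by simp
  qed
  then obtain A1 where A1W: "A1 \<in> W" and A1n: "A1 \<notin> cmat.span {A0}" by blast
  have A1A0: "A1 \<noteq> A0" using A1n cmat.span_base[of A0 "{A0}"] by auto
  have indep: "cmat.independent {A1, A0}"
  proof (intro cmat.independent_insertI)
    show "A1 \<notin> cmat.span {A0}" by (rule A1n)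
    show "A0 \<notin> cmat.span {}" using A0ne by simp
  qed (rule cmat.independent_empty)
  have Wsp: "W \<subseteq> cmat.span {A1, A0}"
    by (rule fill_span) (use dimW A0W A1W A1A0 indep in auto)
  have "\<exists>c. (A0' ** A1) *v v = c *s v" for v
  proof -
    obtain B where B: "B \<in> W" "B \<noteq> 0" "B *v v = 0" using bad by blast
    have "B \<in> cmat.span {A1, A0}" using Wsp B(1) by blast
    then obtain \<alpha> \<beta> where Bc: "B = cmat_scale \<alpha> A1 + cmat_scale \<beta> A0" unfolding span2 by blast
    have eq: "\<alpha> *s (A1 *v v) + \<beta> *s (A0 *v v) = 0"
      using B(3) by (simp add: Bc matrix_vector_mult_add_rdistrib cmat_scale_mv)
    show ?thesis
    proof (cases "\<alpha> = 0")
      case True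
      then have "\<beta> \<noteq> 0" using Bc B(2) by auto
      then have "A0 *v v = 0" using eq True by simp
      then have "v = 0" using A0li[of v] by simp
      then show ?thesis by auto
    next
      case False
      define k where "k = - \<beta> / \<alpha>"
      have "A1 *v v = k *s (A0 *v v)"
      proof (subst vec_eq_iff, intro allI)
        fix i
        have "\<alpha> * (A1 *v v) $ i + \<beta> * (A0 *v v) $ i = 0" using arg_cong[OF eq, of "\<lambda>x. x $ i"] by simp
        then show "(A1 *v v) $ i = (k *s (A0 *v v)) $ i" using False
          by (simp add: k_def field_simps eq_neg_iff_add_eq_0)
      qed
      then have "(A0' ** A1) *v v = k *s v"
        by (simp add: matrix_vector_mul_assoc[symmetric] vector_scalar_commute A0li)
      then show ?thesis by blast
    qed
  qed
  then obtain c where c: "\<forall>v. (A0' ** A1) *v v = c *s v" using eigen_scalar[of "A0' ** A1"] by blast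
  have "A1 *v v = cmat_scale c A0 *v v" for v
  proof -
    have "A1 *v v = A0 *v ((A0' ** A1) *v v)" by (simp add: matrix_vector_mul_assoc[symmetric] A0ri)
    also have "\<dots> = cmat_scale c A0 *v v" by (simp add: c vector_scalar_commute cmat_scale_mv)
    finally show ?thesis .
  qed
  then have "A1 = cmat_scale c A0" by (simp add: matrix_eq)
  then show False using A1n by (auto simp: span1)
qed

theorem lemma6p1:
  fixes W :: "(complex^'n^'n) set"
  assumes "CARD('n) \<le> 3"
    and "cmat.subspace W"
    and "cmat.dim W = CARD('n)"
    and "\<forall>A\<in>W. symmetric_mat A"
    and "\<exists>A\<in>W. invertible A"
  shows "\<exists>v :: complex^'n. \<forall>A\<in>W. A \<noteq> 0 \<longrightarrow> v \<notin> qf_kernel A"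
proof (rule ccontr)
  assume "\<not> ?thesis"
  then have bad: "\<forall>v. \<exists>A\<in>W. A \<noteq> 0 \<and> A *v v = 0" by (auto simp: qf_kernel_def)
  obtain A0 where A0W: "A0 \<in> W" and inv: "invertible A0" using assms(5) by blast
  have "CARD('n) > 0" by simp
  then consider "CARD('n) = 1" | "CARD('n) = 2" | "CARD('n) = 3" using assms(1) by linarith
  then show False
  proof cases
    case 1 then show False using main1[OF _ A0W inv bad] assms(3) by simp
  next
    case 2 then show False using main2[OF _ A0W inv bad] assms(3) by simp
  next
    case 3
    then obtain i1 i2 i3 :: 'n where u: "(UNIV :: 'n set) = {i1, i2, i3}" "i1 \<noteq> i2" "i2 \<noteq> i3" "i1 \<noteq> i3"
      unfolding card_3_iff by blast
    interpret three i1 i2 i3 by unfold_locales (use u in auto)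
    show False using main3[OF assms(2) _ assms(4) A0W inv bad] assms(3) 3 by simp
  qed
qed

end
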